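(* In every state $\mathbf{x}$ of the common-chunk-protocol Markov process (with $k\ge 2$ chunks and any $\lambda>0$), for every chunk $i\in\{1,\dots,k\}$, \[ r\;\ge\;\frac{\bar S_i}{6}\, dS_i^+ \qquad\text{and}\qquad dS_i^+\le \frac{\bar S_i}{S}. \]
   Context: Model: Fix an integer $k\ge 2$ (number of chunks of a file) and $\lambda>0$. There is always exactly one seed holding all $k$ chunks. Non-seed peers arrive according to a Poisson process of rate $\lambda$, each arriving with no chunks; each non-seed peer holds a subset (its profile) of $\{1,\dots,k\}$ and leaves the system immediately once it holds all $k$ chunks. The state $\mathbf{x}$ of the continuous-time Markov process is the number of non-seed peers with each profile. $S$ denotes the total number of peers present, including the seed. Each non-seed peer has an independent rate-1 Poisson clock; at each tick it draws a sample of peers independently and uniformly at random with replacement from the current $S$ peers (seed and itself included) and may instantaneously download at most one chunk that it lacks and that is held by some sampled peer (such a chunk is a "match"). Counting draws with multiplicity, a chunk is "rare" in a sample of 3 draws if exactly one of the 3 draws holds it. Common chunk protocol: (i) a peer with no chunks draws 3 peers and downloads a chunk chosen uniformly among the rare matches, if there is any, otherwise nothing; (ii) a peer holding at least 1 and at most $k-2$ chunks draws 1 peer and downloads a uniformly chosen match, if any, otherwise nothing; (iii) a peer holding exactly $k-1$ chunks draws 3 peers and downloads its missing chunk only if that chunk is held by some draw and every chunk it holds is held by at least 2 of the 3 draws; otherwise nothing. Notation: $S_i$ ($1\le i\le k$) is the number of peers, including the seed, holding chunk $i$; $\bar S_i=S-S_i$. $r=r(\mathbf{x})$ is the total rate of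 download events in state $\mathbf{x}$, i.e. the sum over all non-seed peers of the probability that a clock tick of that peer results in a download. $dS_i^+=dS_i^+(\mathbf{x})$ is the probability that a clock tick of a peer holding no chunks results in that peer downloading chunk $i$. *)

theory Defs
  imports Complex_Main
begin

text \<open>Profiles are subsets of the chunk set {1..k}. A state x assigns to each
profile the number of non-seed peers with that profile (only proper subsets of
{1..k} can occur). The seed is a single extra peer with profile {1..k}.\<close>

definition chunks :: "nat \<Rightarrow> nat set" where
  "chunks k = {1..k}"

definition valid_state :: "nat \<Rightarrow> (nat set \<Rightarrow> nat) \<Rightarrow> bool" where
  "valid_state k x \<longleftrightarrow> (\<forall>A. x A \<noteq> 0 \<longrightarrow> A \<subset> chunks k)"

definition wt :: "nat \<Rightarrow> (nat set \<Rightarrow> nat) \<Rightarrow> nat set \<Rightarrow> real" where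
  "wt k x A = real (x A) + (if A = chunks k then 1 else 0)"

definition totS :: "nat \<Rightarrow> (nat set \<Rightarrow> nat) \<Rightarrow> real" where
  "totS k x = (\<Sum>A\<in>Pow (chunks k). wt k x A)"

definition Si :: "nat \<Rightarrow> (nat set \<Rightarrow> nat) \<Rightarrow> nat \<Rightarrow> real" where
  "Si k x i = (\<Sum>A\<in>{A\<in>Pow (chunks k). i \<in> A}. wt k x A)"

definition Sbar :: "nat \<Rightarrow> (nat set \<Rightarrow> nat) \<Rightarrow> nat \<Rightarrow> real" where
  "Sbar k x i = totS k x - Si k x i"

definition cnt3 :: "nat set \<Rightarrow> nat set \<Rightarrow> nat set \<Rightarrow> nat \<Rightarrow> nat" where
  "cnt3 A B C j = (if j \<in> A then 1 else 0) + (if j \<in> B then 1 else 0) + (if j \<in> C then 1 else 0)"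

definition rare_set :: "nat \<Rightarrow> nat set \<Rightarrow> nat set \<Rightarrow> nat set \<Rightarrow> nat set" where
  "rare_set k A B C = {j \<in> chunks k. cnt3 A B C j = 1}"

text \<open>Expected value of g over three independent uniform draws (with replacement)
from the S peers, the draws being recorded by their profiles.\<close>
definition exp3 :: "nat \<Rightarrow> (nat set \<Rightarrow> nat) \<Rightarrow> (nat set \<Rightarrow> nat set \<Rightarrow> nat set \<Rightarrow> real) \<Rightarrow> real" where
  "exp3 k x g = (\<Sum>A\<in>Pow (chunks k). \<Sum>B\<in>Pow (chunks k). \<Sum>C\<in>Pow (chunks k).
      wt k x A * wt k x B * wt k x C / totS k x ^ 3 * g A B C)"

text \<open>dS_i^+: probability that a tick of an empty peer downloads chunk i
(uniform choice among rare matches).\<close>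
definition dSplus :: "nat \<Rightarrow> (nat set \<Rightarrow> nat) \<Rightarrow> nat \<Rightarrow> real" where
  "dSplus k x i = exp3 k x (\<lambda>A B C. if i \<in> rare_set k A B C
      then 1 / real (card (rare_set k A B C)) else 0)"

text \<open>Probability that a tick of a peer with profile P results in a download.\<close>
definition dl_prob :: "nat \<Rightarrow> (nat set \<Rightarrow> nat) \<Rightarrow> nat set \<Rightarrow> real" where
  "dl_prob k x P =
    (if card P = 0 then
       exp3 k x (\<lambda>A B C. if rare_set k A B C \<noteq> {} then 1 else 0)
     else if card P \<le> k - 2 then
       (\<Sum>B\<in>{B\<in>Pow (chunks k). B - P \<noteq> {}}. wt k x B) / totS k x
     else if card P = k - 1 then
       exp3 k x (\<lambda>A B C. if (\<forall>m\<in>chunks k - P. cnt3 A B C m \<ge> 1)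
                              \<and> (\<forall>j\<in>P. cnt3 A B C j \<ge> 2) then 1 else 0)
     else 0)"

definition rate :: "nat \<Rightarrow> (nat set \<Rightarrow> nat) \<Rightarrow> real" where
  "rate k x = (\<Sum>P\<in>{P. P \<subset> chunks k}. real (x P) * dl_prob k x P)"

end

theory Submission
  imports Defs
begin

lemma finW: "finite (Pow (chunks k))" by (simp add: chunks_def)

lemma wt_nn: "wt k x A \<ge> 0" by (simp add: wt_def)

lemma totS_ge1: "totS k x \<ge> 1"
proof -
  have "wt k x (chunks k) \<le> totS k x" unfolding totS_def
    by (rule member_le_sum) (auto simp: finW wt_nn chunks_def)
  moreover have "wt k x (chunks k) \<ge> 1" by (simp add: wt_def)
  ultimately show ?thesis by linarith
qed

lemma exp3_mono:
  assumes "\<And>A B C. A \<in> Pow (chunks k) \<Longrightarrow> B \<in> Pow (chunks k) \<Longrightarrow> C \<in> Pow (chunks k) \<Longrightarrow> g A B C \<le> h A B C"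
  shows "exp3 k x g \<le> exp3 k x h"
  unfolding exp3_def
  apply (intro sum_mono)
  apply (rule mult_left_mono)
   apply (simp add: assms)
  using totS_ge1[of k x] by (simp add: wt_nn)

lemma exp3_prod:
  "exp3 k x (\<lambda>A B C. f A * g B * h C) =
    (\<Sum>A\<in>Pow (chunks k). wt k x A * f A) * (\<Sum>B\<in>Pow (chunks k). wt k x B * g B)
      * (\<Sum>C\<in>Pow (chunks k). wt k x C * h C) / totS k x ^ 3"
proof -
  have "exp3 k x (\<lambda>A B C. f A * g B * h C) =
     (\<Sum>A\<in>Pow (chunks k). \<Sum>B\<in>Pow (chunks k). \<Sum>C\<in>Pow (chunks k).
       (wt k x A * f A) * ((wt k x B * g B) * (wt k x C * h C)) / totS k x ^ 3)"
    unfolding exp3_def by (intro sum.cong refl) (simp add: field_simps)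
  also have "\<dots> = (\<Sum>A\<in>Pow (chunks k). wt k x A * f A) * ((\<Sum>B\<in>Pow (chunks k). wt k x B * g B)
      * (\<Sum>C\<in>Pow (chunks k). wt k x C * h C)) / totS k x ^ 3"
    unfolding sum_divide_distrib[symmetric]
  proof -
    let ?a = "\<lambda>A. wt k x A * f A" and ?b = "\<lambda>B. wt k x B * g B" and ?c = "\<lambda>C. wt k x C * h C"
    let ?W = "Pow (chunks k)"
    have "(\<Sum>A\<in>?W. ?a A) * ((\<Sum>B\<in>?W. ?b B) * (\<Sum>C\<in>?W. ?c C))
       = (\<Sum>A\<in>?W. ?a A * ((\<Sum>B\<in>?W. ?b B) * (\<Sum>C\<in>?W. ?c C)))"
      by (rule sum_distrib_right)
    also have "\<dots> = (\<Sum>A\<in>?W. \<Sum>B\<in>?W. \<Sum>C\<in>?W. ?a A * (?b B * ?c C))"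
      by (intro sum.cong refl) (simp add: sum_distrib_left sum_distrib_right, rule sum.swap)
    finally show "(\<Sum>A\<in>?W. \<Sum>B\<in>?W. \<Sum>C\<in>?W. ?a A * (?b B * ?c C)) / totS k x ^ 3 =
       (\<Sum>A\<in>?W. ?a A) * ((\<Sum>B\<in>?W. ?b B) * (\<Sum>C\<in>?W. ?c C)) / totS k x ^ 3" by simp
  qed
  finally show ?thesis by (simp add: mult.assoc)
qed

lemma Si_ind: "(\<Sum>A\<in>Pow (chunks k). wt k x A * (if i \<in> A then 1 else 0)) = Si k x i"
  unfolding Si_def by (simp add: sum.inter_filter[OF finW, symmetric] if_distrib cong: if_cong)

lemma Sbar_ind: "(\<Sum>A\<in>Pow (chunks k). wt k x A * (if i \<in> A then 0 else 1)) = Sbar k x i"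
proof -
  have "totS k x = (\<Sum>A\<in>Pow (chunks k). wt k x A * (if i \<in> A then 1 else 0))
      + (\<Sum>A\<in>Pow (chunks k). wt k x A * (if i \<in> A then 0 else 1))"
    unfolding totS_def sum.distrib[symmetric] by (intro sum.cong) auto
  then show ?thesis unfolding Sbar_def Si_ind by simp
qed

lemma exp3_add: "exp3 k x (\<lambda>A B C. g1 A B C + g2 A B C) = exp3 k x g1 + exp3 k x g2"
  unfolding exp3_def by (simp add: distrib_left sum.distrib)

lemma exp3_nn:
  assumes "\<And>A B C. g A B C \<ge> 0" shows "exp3 k x g \<ge> 0"
  unfolding exp3_def using totS_ge1[of k x]
  by (intro sum_nonneg) (simp add: wt_nn assms)

lemma inv_card_le1: "1 / real (n::nat) \<le> (1::real)"
  by (cases n) auto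

lemma dS_pt:
  "(if i \<in> rare_set k A B C then 1 / real (card (rare_set k A B C)) else 0)
   \<le> (if i \<in> A then 1 else (0::real)) * (if i \<in> B then 0 else 1) * (if i \<in> C then 0 else 1)
     + ((if i \<in> A then 0 else 1) * (if i \<in> B then 1 else 0) * (if i \<in> C then 0 else 1)
     + (if i \<in> A then 0 else 1) * (if i \<in> B then 0 else 1) * (if i \<in> C then 1 else 0))"
proof (cases "i \<in> rare_set k A B C")
  case True
  hence "cnt3 A B C i = 1" by (simp add: rare_set_def)
  hence "(i \<in> A \<and> i \<notin> B \<and> i \<notin> C) \<or> (i \<notin> A \<and> i \<in> B \<and> i \<notin> C) \<or> (i \<notin> A \<and> i \<notin> B \<and> i \<in> C)"
    unfolding cnt3_def by (auto split: if_splits)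
  then show ?thesis using True inv_card_le1[of "card (rare_set k A B C)"] by auto
qed simp

lemma dS_bound: "dSplus k x i \<le> 3 * Si k x i * Sbar k x i ^ 2 / totS k x ^ 3"
proof -
  let ?h = "\<lambda>A::nat set. if i \<in> A then 1 else (0::real)"
  let ?n = "\<lambda>A::nat set. if i \<in> A then 0 else (1::real)"
  have "dSplus k x i \<le> exp3 k x (\<lambda>A B C. ?h A * ?n B * ?n C + (?n A * ?h B * ?n C + ?n A * ?n B * ?h C))"
    unfolding dSplus_def by (rule exp3_mono, rule dS_pt)
  also have "\<dots> = exp3 k x (\<lambda>A B C. ?h A * ?n B * ?n C) + (exp3 k x (\<lambda>A B C. ?n A * ?h B * ?n C) + exp3 k x (\<lambda>A B C. ?n A * ?n B * ?h C))"
    by (simp only: exp3_add)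
  also have "\<dots> = 3 * Si k x i * Sbar k x i ^ 2 / totS k x ^ 3"
    unfolding exp3_prod Si_ind Sbar_ind by (simp add: power2_eq_square add_divide_distrib[symmetric])
  finally show ?thesis .
qed

lemma Si_Sbar: "Si k x i + Sbar k x i = totS k x" "Si k x i \<ge> 0" "Sbar k x i \<ge> 0"
proof -
  show "Si k x i + Sbar k x i = totS k x" by (simp add: Sbar_def)
  show "Si k x i \<ge> 0" unfolding Si_def by (intro sum_nonneg) (simp add: wt_nn)
  show "Sbar k x i \<ge> 0" unfolding Sbar_ind[symmetric] by (intro sum_nonneg) (simp add: wt_nn)
qed

lemma dS_nn: "dSplus k x i \<ge> 0"
  unfolding dSplus_def by (rule exp3_nn) simp

lemma second_part: "dSplus k x i \<le> Sbar k x i / totS k x"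
proof -
  define a where "a = Si k x i"
  define b where "b = Sbar k x i"
  define S where "S = totS k x"
  have S: "S = a + b" "a \<ge> 0" "b \<ge> 0" using Si_Sbar[of k x i] by (auto simp: a_def b_def S_def)
  have S1: "S \<ge> 1" unfolding S_def by (rule totS_ge1)
  have e: "(a+b)^2 = (a-b)^2 + 4*(a*b)" by (simp add: power2_eq_square algebra_simps)
  have "0 \<le> (a-b)^2" by simp
  moreover have "0 \<le> a*b" using S by simp
  ultimately have "3 * a * b \<le> S ^ 2" unfolding S(1) e by linarith
  hence "(3 * a * b) * b \<le> S ^ 2 * b" using S(3) by (rule mult_right_mono)
  hence "(3 * a * b) * b / S^3 \<le> S ^ 2 * b / S^3" by (rule divide_right_mono) (use S1 in simp)
  also have "S ^ 2 * b / S^3 = b / S" using S1 by (simp add: power2_eq_square power3_eq_cube)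
  finally have "3 * a * b^2 / S^3 \<le> b / S" by (simp add: power2_eq_square mult.assoc)
  thus ?thesis using dS_bound[of k x i] unfolding a_def b_def S_def by linarith
qed

lemma dl_nn: "dl_prob k x P \<ge> 0"
  unfolding dl_prob_def using totS_ge1[of k x]
  by (auto intro!: exp3_nn divide_nonneg_pos sum_nonneg simp: wt_nn)

lemma dl_empty: "dl_prob k x {} \<ge> dSplus k x i"
  unfolding dl_prob_def dSplus_def
  by (simp, rule exp3_mono) (auto simp: inv_card_le1)

lemma dl_mid:
  assumes "card P \<noteq> 0" "card P \<le> k - 2" "i \<notin> P"
  shows "dl_prob k x P \<ge> Si k x i / totS k x"
proof -
  have "Si k x i \<le> (\<Sum>B\<in>{B\<in>Pow (chunks k). B - P \<noteq> {}}. wt k x B)"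
    unfolding Si_def by (rule sum_mono2) (use assms(3) finW in \<open>auto simp: wt_nn\<close>)
  then show ?thesis using assms totS_ge1[of k x]
    unfolding dl_prob_def by (simp add: divide_right_mono)
qed

lemma card_P0:
  assumes "i \<in> chunks k" shows "card (chunks k - {i}) = k - 1"
  using assms by (simp add: chunks_def)

lemma dl_full:
  assumes "k \<ge> 2" "i \<in> chunks k"
  shows "dl_prob k x (chunks k - {i}) \<ge> Si k x i * real (x (chunks k - {i})) ^ 2 / totS k x ^ 3"
proof -
  let ?P = "chunks k - {i}"
  let ?h = "\<lambda>A::nat set. if i \<in> A then 1 else (0::real)"
  let ?g = "\<lambda>A::nat set. if ?P \<subseteq> A then 1 else (0::real)"
  define G where "G = (\<Sum>B\<in>Pow (chunks k). wt k x B * ?g B)"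
  have cP: "card ?P = k - 1" using card_P0[OF assms(2)] .
  have "dl_prob k x ?P = exp3 k x (\<lambda>A B C. if (\<forall>m\<in>chunks k - ?P. cnt3 A B C m \<ge> 1)
                              \<and> (\<forall>j\<in>?P. cnt3 A B C j \<ge> 2) then 1 else 0)"
  proof -
    have n1: "(k - 1 = 0) = False" "(k - 1 \<le> k - 2) = False" using assms(1) by auto
    show ?thesis by (simp only: dl_prob_def cP n1 if_False simp_thms(6) if_True)
  qed
  also have "\<dots> \<ge> exp3 k x (\<lambda>A B C. ?h A * ?g B * ?g C)"
    by (rule exp3_mono) (use assms(2) in \<open>auto simp: cnt3_def\<close>)
  finally have 1: "dl_prob k x ?P \<ge> Si k x i * G * G / totS k x ^ 3"
    unfolding exp3_prod Si_ind G_def by simp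
  have "wt k x ?P * ?g ?P \<le> G" unfolding G_def
    by (rule member_le_sum) (auto simp: finW wt_nn chunks_def)
  moreover have "wt k x ?P = x ?P" using assms(2) by (auto simp: wt_def)
  ultimately have "x ?P \<le> G" by simp
  hence "real (x ?P) ^ 2 \<le> G * G" by (simp add: power2_eq_square mult_mono)
  hence "Si k x i * real (x ?P) ^ 2 \<le> Si k x i * (G * G)" using Si_Sbar(2)[of k x i] by (rule mult_left_mono)
  hence "Si k x i * real (x ?P) ^ 2 / totS k x ^ 3 \<le> Si k x i * G * G / totS k x ^ 3"
    using totS_ge1[of k x] by (simp add: divide_right_mono mult.assoc)
  with 1 show ?thesis by linarith
qed

lemma arith_final:
  fixes E F M G dS q Sb S :: real
  assumes "E \<ge> 0" "F \<ge> 0" "M \<ge> 0" "G \<ge> F" "q \<ge> 0" "dS \<ge> 0"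
    "Sb = E + F + M" "Sb \<le> S" "dS \<le> 3 * q * Sb^2"
  shows "Sb / 6 * dS \<le> E * dS + F * (q * G^2) + M * (q * S^2)"
proof -
  have "Sb^2 \<le> S^2" using assms by (intro power_mono) auto
  hence "3 * q * Sb^2 \<le> 3 * q * S^2" using assms(5) by (simp add: mult_left_mono)
  hence m: "M * dS \<le> M * (3 * (q * S^2))" using assms by (intro mult_left_mono) auto
  have fq: "0 \<le> F * (q * G^2)" using assms by simp
  show ?thesis
  proof (cases "E + M \<ge> F")
    case True
    have "Sb / 6 * dS \<le> (E + M) / 3 * dS" using True assms by (intro mult_right_mono) auto
    also have "\<dots> \<le> E * dS + M * dS / 3" using assms by (simp add: field_simps mult_right_mono)
    finally show ?thesis using m fq by linarith
  next
    case False
    define oo where "oo = E + M"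
    have oo: "0 \<le> oo" "oo < F" using False assms by (auto simp: oo_def)
    have poly: "(F - oo) * (F + oo)^2 \<le> 2 * F^3"
    proof -
      have "2 * F^3 - (F - oo) * (F + oo)^2 = F^2 * (F - oo) + F * oo^2 + oo^3"
        by (simp add: power2_eq_square power3_eq_cube algebra_simps)
      moreover have "0 \<le> F^2 * (F - oo) + F * oo^2 + oo^3" using oo by simp
      ultimately show ?thesis by linarith
    qed
    have "F * F \<le> G * G" using assms by (intro mult_mono) auto
    hence "F * (F * F) \<le> F * (G * G)" using assms by (intro mult_left_mono) auto
    hence "F^3 \<le> F * G^2" by (simp add: power3_eq_cube power2_eq_square)
    hence poly2: "(F - oo) * (F + oo)^2 \<le> 2 * (F * G^2)" using poly by linarith
    have "(F - oo) * dS \<le> (F - oo) * (3 * q * Sb^2)" using oo assms by (intro mult_left_mono) auto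
    also have "\<dots> = 3 * q * ((F - oo) * (F + oo)^2)" using assms by (simp add: oo_def algebra_simps)
    also have "\<dots> \<le> 3 * q * (2 * (F * G^2))" using poly2 assms by (intro mult_left_mono) auto
    finally have k1: "(F - oo) * dS \<le> 6 * (F * (q * G^2))" by (simp add: algebra_simps)
    have e1: "Sb / 6 * dS = oo / 3 * dS + (F - oo) * dS / 6" using assms by (simp add: oo_def field_simps)
    have "oo / 3 * dS \<le> E * dS + M * dS / 3" using assms by (simp add: oo_def field_simps mult_right_mono)
    then show ?thesis using e1 k1 m by linarith
  qed
qed

theorem mainTheorem4:
  fixes k :: nat and lambda :: real and x :: "nat set \<Rightarrow> nat" and i :: nat
  assumes "k \<ge> 2" and "lambda > 0" and "valid_state k x" and "i \<in> {1..k}"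
  shows "rate k x \<ge> Sbar k x i / 6 * dSplus k x i \<and> dSplus k x i \<le> Sbar k x i / totS k x"
proof
  show "dSplus k x i \<le> Sbar k x i / totS k x" by (rule second_part)
  have ic: "i \<in> chunks k" using assms(4) by (simp add: chunks_def)
  define N where "N = {P\<in>Pow (chunks k). i \<notin> P}"
  define P0 where "P0 = chunks k - {i}"
  define f where "f = (\<lambda>P. real (x P) * dl_prob k x P)"
  define R where "R = N - {{}, P0}"
  have finN: "finite N" unfolding N_def using finW[of k] by simp
  have fnn: "\<And>P. f P \<ge> 0" unfolding f_def by (simp add: dl_nn)
  have "rate k x = sum f {P. P \<subset> chunks k}" unfolding rate_def f_def ..
  also have "\<dots> \<ge> sum f N"
    by (rule sum_mono2) (use ic fnn finW[of k] in \<open>auto simp: N_def intro: finite_subset\<close>)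
  finally have r1: "sum f N \<le> rate k x" .
  have eN: "{} \<in> N" "P0 \<in> N" unfolding N_def P0_def by auto
  obtain j where j: "j \<in> chunks k" "j \<noteq> i" using assms(1) ic unfolding chunks_def
  proof (cases "i = 1")
    case True thus ?thesis using that[of 2] assms(1) by (auto simp: chunks_def)
  next
    case False thus ?thesis using that[of 1] assms(1) by (auto simp: chunks_def)
  qed
  have P0ne: "P0 \<noteq> {}" using j unfolding P0_def by auto
  have splitsum: "\<And>g::nat set \<Rightarrow> real. sum g N = g {} + g P0 + sum g R"
  proof -
    fix g :: "nat set \<Rightarrow> real"
    have "sum g N = g {} + sum g (N - {{}})" using finN eN by (simp add: sum.remove)
    also have "sum g (N - {{}}) = g P0 + sum g (N - {{}} - {P0})"
      using finN eN P0ne by (intro sum.remove) auto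
    finally show "sum g N = g {} + g P0 + sum g R" unfolding R_def by (simp add: Diff_insert2[symmetric] insert_commute)
  qed
  have Sb: "Sbar k x i = (\<Sum>P\<in>N. real (x P))"
  proof -
    have "(\<Sum>P\<in>N. wt k x P) = (\<Sum>A\<in>Pow (chunks k). if i \<notin> A then wt k x A else 0)"
      unfolding N_def by (rule sum.inter_filter[OF finW])
    also have "\<dots> = Sbar k x i" unfolding Sbar_ind[symmetric] by (intro sum.cong) auto
    finally have "Sbar k x i = (\<Sum>P\<in>N. wt k x P)" ..
    also have "\<dots> = (\<Sum>P\<in>N. real (x P))" using ic by (intro sum.cong) (auto simp: N_def wt_def)
    finally show ?thesis .
  qed
  define E where "E = real (x {})"
  define F where "F = real (x P0)"
  define M where "M = (\<Sum>P\<in>R. real (x P))"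
  define S where "S = totS k x"
  define q where "q = Si k x i / S^3"
  have S1: "S \<ge> 1" unfolding S_def by (rule totS_ge1)
  have midR: "\<And>P. P \<in> R \<Longrightarrow> dl_prob k x P \<ge> Si k x i / totS k x"
  proof -
    fix P assume P: "P \<in> R"
    have fP: "finite P" using P unfolding R_def N_def chunks_def by (auto intro: finite_subset)
    have "P \<subset> P0" using P unfolding R_def N_def P0_def by auto
    hence "card P < card P0" by (rule psubset_card_mono[rotated]) (simp add: P0_def chunks_def)
    hence "card P \<le> k - 2" using card_P0[OF ic] unfolding P0_def by simp
    moreover have "card P \<noteq> 0" using P fP unfolding R_def by auto
    moreover have "i \<notin> P" using P unfolding R_def N_def by auto
    ultimately show "dl_prob k x P \<ge> Si k x i / totS k x" using dl_mid[of P k i x] by blast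
  qed
  have eq1: "Si k x i * F^2 / S^3 = q * F^2" unfolding q_def by simp
  have eq2: "Si k x i / totS k x = q * S^2" unfolding q_def S_def using S1[unfolded S_def]
    by (simp add: power2_eq_square power3_eq_cube)
  have a1: "sum f R \<ge> M * (Si k x i / totS k x)"
    unfolding M_def sum_distrib_right f_def
    by (rule sum_mono, rule mult_left_mono) (auto simp: midR)
  have a2: "f {} \<ge> E * dSplus k x i" unfolding f_def E_def
    by (rule mult_left_mono) (auto simp: dl_empty)
  have a3: "f P0 \<ge> F * (Si k x i * F^2 / S^3)" unfolding f_def F_def S_def P0_def
    by (rule mult_left_mono) (use dl_full[OF assms(1) ic] in auto)
  have r2: "E * dSplus k x i + F * (q * F^2) + M * (q * S^2) \<le> rate k x"
    using r1 splitsum[of f] a1[unfolded eq2] a2 a3[unfolded eq1] by linarith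
  have SbE: "Sbar k x i = E + F + M" unfolding Sb splitsum E_def F_def M_def ..
  have "Sbar k x i / 6 * dSplus k x i \<le> E * dSplus k x i + F * (q * F^2) + M * (q * S^2)"
  proof (rule arith_final)
    show "0 \<le> E" "0 \<le> F" "0 \<le> M" "F \<le> F" unfolding E_def F_def M_def by (auto intro: sum_nonneg)
    show "0 \<le> q" unfolding q_def using S1 Si_Sbar(2)[of k x i] by simp
    show "0 \<le> dSplus k x i" by (rule dS_nn)
    show "Sbar k x i = E + F + M" by (rule SbE)
    show "Sbar k x i \<le> S" unfolding S_def using Si_Sbar[of k x i] by linarith
    show "dSplus k x i \<le> 3 * q * (Sbar k x i)^2" using dS_bound[of k x i] unfolding q_def S_def by simp
  qed
  with r2 show "Sbar k x i / 6 * dSplus k x i \<le> rate k x" by linarith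
qed

end
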